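(* The Lie algebra $T^*\mathfrak{su}(2)$ (of dimension 6) admits no $k$-symplectic structure for any $k\ge1$.
   Context: $\mathfrak{su}(2)$ is the Lie algebra of $2\times2$ skew-Hermitian traceless complex matrices. For a Lie algebra $\mathfrak{g}$, $T^*\mathfrak{g}=\mathfrak{g}\oplus\mathfrak{g}^*$ with bracket $[u+\alpha,v+\beta]=[u,v]+\mathrm{ad}_u^*\beta-\mathrm{ad}_v^*\alpha$, where $(\mathrm{ad}_u^*\alpha)(v)=-\alpha([u,v])$. A $k$-symplectic structure on a real Lie algebra $\mathfrak{g}$ of dimension $n(k+1)$ ($n,k\ge1$) is a pair consisting of a Lie subalgebra $\mathfrak{h}\subset\mathfrak{g}$ of dimension $nk$ and a family $(\theta_1,\dots,\theta_k)$ of skew-symmetric bilinear forms on $\mathfrak{g}$ such that: (i) $\bigcap_{i=1}^k\ker\theta_i=\{0\}$, where $\ker\theta_i=\{u\in\mathfrak{g}:\theta_i(u,v)=0\ \forall v\in\mathfrak{g}\}$; (ii) each $\theta_i$ is a 2-cocycle: $\theta_i([u,v],w)+\theta_i([v,w],u)+\theta_i([w,u],v)=0$ for all $u,v,w$; (iii) $\theta_i(u,v)=0$ for all $u,v\in\mathfrak{h}$ and all $i$. *)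

theory Defs
  imports "HOL-Analysis.Analysis" "HOL-Library.Function_Algebras" "HOL-Library.Product_Plus"
begin

definition real_subspace_of :: "(real \<Rightarrow> 'a \<Rightarrow> 'a) \<Rightarrow> 'a::ab_group_add set \<Rightarrow> bool" where
  "real_subspace_of sc S \<longleftrightarrow> 0 \<in> S \<and> (\<forall>u\<in>S. \<forall>v\<in>S. u + v \<in> S) \<and> (\<forall>r. \<forall>u\<in>S. sc r u \<in> S)"

definition lie_subalgebra :: "(real \<Rightarrow> 'a \<Rightarrow> 'a) \<Rightarrow> ('a \<Rightarrow> 'a \<Rightarrow> 'a) \<Rightarrow> 'a::ab_group_add set \<Rightarrow> 'a set \<Rightarrow> bool" where
  "lie_subalgebra sc br L H \<longleftrightarrow> H \<subseteq> L \<and> real_subspace_of sc H \<and> (\<forall>u\<in>H. \<forall>v\<in>H. br u v \<in> H)"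

definition skew_bilinear_form :: "(real \<Rightarrow> 'a \<Rightarrow> 'a) \<Rightarrow> 'a::ab_group_add set \<Rightarrow> ('a \<Rightarrow> 'a \<Rightarrow> real) \<Rightarrow> bool" where
  "skew_bilinear_form sc L \<theta> \<longleftrightarrow>
     (\<forall>u\<in>L. \<forall>u'\<in>L. \<forall>v\<in>L. \<theta> (u + u') v = \<theta> u v + \<theta> u' v) \<and>
     (\<forall>r. \<forall>u\<in>L. \<forall>v\<in>L. \<theta> (sc r u) v = r * \<theta> u v) \<and>
     (\<forall>u\<in>L. \<forall>v\<in>L. \<theta> u v = - \<theta> v u)"

definition two_cocycle :: "('a \<Rightarrow> 'a \<Rightarrow> 'a) \<Rightarrow> 'a set \<Rightarrow> ('a \<Rightarrow> 'a \<Rightarrow> real) \<Rightarrow> bool" where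
  "two_cocycle br L \<theta> \<longleftrightarrow>
     (\<forall>u\<in>L. \<forall>v\<in>L. \<forall>w\<in>L. \<theta> (br u v) w + \<theta> (br v w) u + \<theta> (br w u) v = 0)"

definition form_kernel :: "'a set \<Rightarrow> ('a \<Rightarrow> 'a \<Rightarrow> real) \<Rightarrow> 'a set" where
  "form_kernel L \<theta> = {u \<in> L. \<forall>v\<in>L. \<theta> u v = 0}"

definition k_symplectic_structure ::
  "(real \<Rightarrow> 'a \<Rightarrow> 'a) \<Rightarrow> ('a \<Rightarrow> 'a \<Rightarrow> 'a) \<Rightarrow> 'a::ab_group_add set \<Rightarrow> nat \<Rightarrow> 'a set \<Rightarrow> (nat \<Rightarrow> 'a \<Rightarrow> 'a \<Rightarrow> real) \<Rightarrow> bool" where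
  "k_symplectic_structure sc br L k H \<theta> \<longleftrightarrow>
     k \<ge> 1 \<and>
     (\<exists>n::nat. n \<ge> 1 \<and> vector_space.dim sc L = n * (k + 1) \<and> vector_space.dim sc H = n * k) \<and>
     lie_subalgebra sc br L H \<and>
     (\<forall>i\<in>{1..k}. skew_bilinear_form sc L (\<theta> i)) \<and>
     (\<Inter>i\<in>{1..k}. form_kernel L (\<theta> i)) = {0} \<and>
     (\<forall>i\<in>{1..k}. two_cocycle br L (\<theta> i)) \<and>
     (\<forall>i\<in>{1..k}. \<forall>u\<in>H. \<forall>v\<in>H. \<theta> i u v = 0)"

definition su2 :: "(complex^2^2) set" where
  "su2 = {A. (\<forall>i j. A $ i $ j = - cnj (A $ j $ i)) \<and> A $ 1 $ 1 + A $ 2 $ 2 = 0}"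

definition su2_bracket :: "complex^2^2 \<Rightarrow> complex^2^2 \<Rightarrow> complex^2^2" where
  "su2_bracket A B = A ** B - B ** A"

text \<open>The dual su(2)^*: real-linear functionals on su(2), normalised to vanish outside su(2).\<close>
definition su2_dual :: "(complex^2^2 \<Rightarrow> real) set" where
  "su2_dual = {\<alpha>. (\<forall>a\<in>su2. \<forall>b\<in>su2. \<alpha> (a + b) = \<alpha> a + \<alpha> b) \<and>
                  (\<forall>r. \<forall>a\<in>su2. \<alpha> (r *\<^sub>R a) = r * \<alpha> a) \<and>
                  (\<forall>x. x \<notin> su2 \<longrightarrow> \<alpha> x = 0)}"

definition su2_coad :: "complex^2^2 \<Rightarrow> (complex^2^2 \<Rightarrow> real) \<Rightarrow> (complex^2^2 \<Rightarrow> real)" where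
  "su2_coad u \<alpha> = (\<lambda>v. if v \<in> su2 then - \<alpha> (su2_bracket u v) else 0)"

type_synonym tsu2 = "(complex^2^2) \<times> (complex^2^2 \<Rightarrow> real)"

definition Tsu2 :: "tsu2 set" where
  "Tsu2 = su2 \<times> su2_dual"

definition Tsu2_scale :: "real \<Rightarrow> tsu2 \<Rightarrow> tsu2" where
  "Tsu2_scale r x = (r *\<^sub>R fst x, \<lambda>w. r * snd x w)"

definition Tsu2_bracket :: "tsu2 \<Rightarrow> tsu2 \<Rightarrow> tsu2" where
  "Tsu2_bracket x y =
     (su2_bracket (fst x) (fst y), \<lambda>w. su2_coad (fst x) (snd y) w - su2_coad (fst y) (snd x) w)"

end

theory Submission
  imports Defs "HOL-Analysis.Cross3"
begin


type_synonym v6 = "(real^3) \<times> (real^3)"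

definition br6 :: "v6 \<Rightarrow> v6 \<Rightarrow> v6" where
  "br6 p q = (2 *\<^sub>R cross3 (fst p) (fst q),
              2 *\<^sub>R (cross3 (fst p) (snd q) - cross3 (fst q) (snd p)))"

lemma vec3_expand: "(x::real^3) = x$1 *\<^sub>R axis 1 1 + x$2 *\<^sub>R axis 2 1 + x$3 *\<^sub>R axis 3 1"
  by (simp add: vec_eq_iff forall_3 axis_def)

lemma bilin3_expand:
  fixes g :: "real^3 \<Rightarrow> real^3 \<Rightarrow> real"
  assumes a1: "\<And>x x' f. g (x+x') f = g x f + g x' f"
    and h1: "\<And>r x f. g (r *\<^sub>R x) f = r * g x f"
    and a2: "\<And>x f f'. g x (f+f') = g x f + g x f'"
    and h2: "\<And>r x f. g x (r *\<^sub>R f) = r * g x f"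
  shows "g x f = (\<Sum>i\<in>UNIV. \<Sum>j\<in>UNIV. x$i * f$j * g (axis i 1) (axis j 1))"
proof -
  have "g x f = g (x$1 *\<^sub>R axis 1 1 + x$2 *\<^sub>R axis 2 1 + x$3 *\<^sub>R axis 3 1)
                  (f$1 *\<^sub>R axis 1 1 + f$2 *\<^sub>R axis 2 1 + f$3 *\<^sub>R axis 3 1)"
    using vec3_expand[of x] vec3_expand[of f] by simp
  also have "\<dots> = (\<Sum>i\<in>UNIV. \<Sum>j\<in>UNIV. x$i * f$j * g (axis i 1) (axis j 1))"
    by (simp add: a1 h1 a2 h2 sum_3 algebra_simps)
  finally show ?thesis .
qed

lemma cross_cross_expand: "cross3 f (cross3 g f) = (f \<bullet> f) *\<^sub>R g - (f \<bullet> g) *\<^sub>R f"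
  by (simp add: cross3_simps forall_3)

lemma cocycle_form:
  fixes T :: "v6 \<Rightarrow> v6 \<Rightarrow> real"
  assumes add: "\<And>p p' q. T (p+p') q = T p q + T p' q"
    and hom: "\<And>r p q. T (r *\<^sub>R p) q = r * T p q"
    and skew: "\<And>p q. T p q = - T q p"
    and coc: "\<And>p q r. T (br6 p q) r + T (br6 q r) p + T (br6 r p) q = 0"
  shows "\<exists>b. \<forall>x y f. T (x,y) (0,f) = b \<bullet> cross3 x f"
proof -
  have add2: "\<And>p q q'. T p (q+q') = T p q + T p q'"
    using add skew by (metis minus_add_distrib)
  have hom2: "\<And>r p q. T p (r *\<^sub>R q) = r * T p q"
    using hom skew by (metis mult_minus_right)
  have z1: "\<And>q. T 0 q = 0" using hom[of 0] by simp
  have z1': "\<And>q. T (0,0) q = 0" using z1 by (simp add: zero_prod_def)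
  define B where "B x f = T (x,0) (0,f)" for x f
  define S where "S y f = T (0,y) (0,f)" for y f
  have split: "T (x,y) (0,f) = B x f + S y f" for x y f
  proof -
    have "(x,y) = (x,0) + (0::real^3,y)" by simp
    then show ?thesis unfolding B_def S_def by (metis add)
  qed
  have Sa1: "S (y+y') f = S y f + S y' f" for y y' f
    unfolding S_def using add[of "(0,y)" "(0,y')"] by simp
  have Sh1: "S (r *\<^sub>R y) f = r * S y f" for r y f
    unfolding S_def using hom[of r "(0,y)"] by simp
  have Sskew: "S y f = - S f y" for y f unfolding S_def by (rule skew)
  have Srel: "S (cross3 x y) f = S (cross3 x f) y" for x y f
  proof -
    have e1: "br6 (x,0) (0,y) = 2 *\<^sub>R (0, cross3 x y)" by (simp add: br6_def)
    have e2: "br6 (0,y) (0,f) = 0" by (simp add: br6_def zero_prod_def)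
    have e3: "br6 (0,f) (x,0) = (-2) *\<^sub>R (0, cross3 x f)" by (simp add: br6_def)
    have "T (br6 (x,0) (0,y)) (0,f) + T (br6 (0,y) (0,f)) (x,0) + T (br6 (0,f) (x,0)) (0,y) = 0"
      by (rule coc)
    then have "2 * S (cross3 x y) f - 2 * S (cross3 x f) y = 0"
      unfolding e1 e2 e3 hom z1 S_def by simp
    then show ?thesis by simp
  qed
  have S0: "S g f = 0" for g f
  proof -
    have a: "S (cross3 f (cross3 g f)) f = 0"
      using Srel[of f "cross3 g f" f] by (simp add: S_def z1')
    have b: "S f f = 0" using Sskew[of f f] by simp
    have "S ((f \<bullet> f) *\<^sub>R g) f = S (cross3 f (cross3 g f)) f + S ((f \<bullet> g) *\<^sub>R f) f"
      by (metis Sa1 cross_cross_expand diff_add_cancel)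
    then have "(f \<bullet> f) * S g f = 0" using a b Sh1 by simp
    then show ?thesis using Sskew[of g 0] Sh1[of 0 f] by (cases "f = 0") auto
  qed
  have Ba1: "B (x+x') f = B x f + B x' f" for x x' f
    unfolding B_def using add[of "(x,0)" "(x',0)"] by simp
  have Bh1: "B (r *\<^sub>R x) f = r * B x f" for r x f
    unfolding B_def using hom[of r "(x,0)"] by simp
  have Ba2: "B x (f+f') = B x f + B x f'" for x f f'
    unfolding B_def using add2[of "(x,0)" "(0,f)" "(0,f')"] by simp
  have Bh2: "B x (r *\<^sub>R f) = r * B x f" for r x f
    unfolding B_def using hom2[of "(x,0)" r "(0,f)"] by simp
  have Bn1: "B (-x) f = - B x f" for x f using Bh1[of "-1" x f] by simp
  have Bn2: "B x (-f) = - B x f" for x f using Bh2[of x "-1" f] by simp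
  have B01: "B 0 f = 0" for f using Bh1[of 0 0 f] by simp
  have B02: "B x 0 = 0" for x using Bh2[of x 0 0] by simp
  have Brel: "B (cross3 x x') f - B x (cross3 x' f) + B x' (cross3 x f) = 0" for x x' f
  proof -
    have e1: "br6 (x,0) (x',0) = 2 *\<^sub>R (cross3 x x', 0)" by (simp add: br6_def)
    have e2: "br6 (x',0) (0,f) = 2 *\<^sub>R (0, cross3 x' f)" by (simp add: br6_def)
    have e3: "br6 (0,f) (x,0) = (-2) *\<^sub>R (0, cross3 x f)" by (simp add: br6_def)
    have "T (br6 (x,0) (x',0)) (0,f) + T (br6 (x',0) (0,f)) (x,0) + T (br6 (0,f) (x,0)) (x',0) = 0"
      by (rule coc)
    then have "2 * B (cross3 x x') f + 2 * T (0, cross3 x' f) (x,0) - 2 * T (0, cross3 x f) (x',0) = 0"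
      unfolding e1 e2 e3 hom B_def by simp
    moreover have "T (0, v) (w,0) = - B w v" for v w unfolding B_def by (rule skew)
    ultimately show ?thesis by simp
  qed
  define m where "m i j = B (axis i 1) (axis j 1)" for i j
  have eqs: "m 1 1 = 0" "m 2 2 = 0" "m 3 3 = 0" "m 1 2 = - m 2 1" "m 1 3 = - m 3 1" "m 2 3 = - m 3 2"
  proof -
    note R = Brel[of "axis 1 1" "axis 2 1" "axis 1 1"] Brel[of "axis 1 1" "axis 2 1" "axis 2 1"]
      Brel[of "axis 1 1" "axis 2 1" "axis 3 1"] Brel[of "axis 2 1" "axis 3 1" "axis 1 1"]
      Brel[of "axis 2 1" "axis 3 1" "axis 2 1"] Brel[of "axis 2 1" "axis 3 1" "axis 3 1"]
      Brel[of "axis 3 1" "axis 1 1" "axis 1 1"] Brel[of "axis 3 1" "axis 1 1" "axis 2 1"]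
      Brel[of "axis 3 1" "axis 1 1" "axis 3 1"]
    have R': "m 3 1 + m 1 3 = 0" "m 3 2 + m 2 3 = 0" "m 3 3 - m 1 1 - m 2 2 = 0"
       "m 1 1 - m 2 2 - m 3 3 = 0" "m 1 2 + m 2 1 = 0" "m 1 3 + m 3 1 = 0"
       "m 2 1 + m 1 2 = 0" "m 2 2 - m 3 3 - m 1 1 = 0" "m 2 3 + m 3 2 = 0"
      using R by (simp_all add: cross_basis Bn1 Bn2 B01 B02 m_def)
    then show "m 1 1 = 0" "m 2 2 = 0" "m 3 3 = 0" "m 1 2 = - m 2 1" "m 1 3 = - m 3 1" "m 2 3 = - m 3 2"
      by linarith+
  qed
  define b :: "real^3" where "b = vector [m 2 3, m 3 1, m 1 2]"
  have Bform: "B x f = b \<bullet> cross3 x f" for x f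
  proof -
    have "B x f = (\<Sum>i\<in>UNIV. \<Sum>j\<in>UNIV. x$i * f$j * m i j)"
      unfolding m_def by (rule bilin3_expand) (auto simp: Ba1 Bh1 Ba2 Bh2)
    then show ?thesis using eqs by (simp add: b_def cross3_simps)
  qed
  show ?thesis using split S0 Bform by auto
qed



lemma card4: "card {a, b, c, d} \<le> 4"
  by (rule order_trans[OF card_insert_le_m1[of 4]]) (auto simp: card_insert_if)

lemma A_subspace: "subspace {p::v6. fst p = 0}"
  by (auto simp: subspace_def)

lemma zero_f_expand: fixes f :: "real^3" shows "((0::real^3), f) = f$1 *\<^sub>R ((0::real^3), axis 1 1) + f$2 *\<^sub>R (0, axis 2 1) + f$3 *\<^sub>R (0, axis 3 1)"
  using vec3_expand[of f] by (simp add: prod_eq_iff)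

lemma A_dim: "dim {p::v6. fst p = 0} = 3"
proof -
  let ?A = "{p::v6. fst p = 0}"
  let ?W = "{((0::real^3), axis 1 1), (0, axis 2 1), (0, axis 3 1)} :: v6 set"
  have cW: "card ?W = 3" by (simp add: axis_eq_axis)
  have "?A \<subseteq> span ?W"
  proof
    fix p :: v6 assume "p \<in> ?A"
    then have p: "p = (0, snd p)" by (simp add: prod_eq_iff)
    show "p \<in> span ?W"
      by (subst p, subst zero_f_expand) (intro span_add span_scale span_base; simp)
  qed
  then have le: "dim ?A \<le> 3" using dim_le_card[of ?A ?W] cW by simp
  have ind: "independent ?W"
    by (rule pairwise_orthogonal_independent) (auto simp: pairwise_def orthogonal_def axis_eq_axis inner_axis_axis zero_prod_def)
  have "card ?W \<le> dim ?A" by (rule independent_card_le_dim[OF _ ind]) auto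
  with le cW show ?thesis by simp
qed

lemma subalg_A:
  fixes H :: "v6 set"
  assumes sub: "subspace H" and cl: "\<And>p q. p\<in>H \<Longrightarrow> q\<in>H \<Longrightarrow> br6 p q \<in> H" and d: "dim H \<ge> 4"
  shows "(\<forall>f. (0,f) \<in> H) \<and> (\<exists>p\<in>H. fst p \<noteq> 0)"
proof -
  let ?A = "{p::v6. fst p = 0}"
  let ?HA = "{x + y |x y. x \<in> H \<and> y \<in> ?A}"
  have sums: "dim ?HA + dim (H \<inter> ?A) = dim H + 3"
    using dim_sums_Int[OF sub A_subspace] A_dim by simp
  have sc: "\<And>r p. p \<in> H \<Longrightarrow> r *\<^sub>R p \<in> H" using sub by (simp add: subspace_scale)
  have ad: "\<And>p q. p \<in> H \<Longrightarrow> q \<in> H \<Longrightarrow> p + q \<in> H" using sub by (simp add: subspace_add)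
  have second: "\<exists>p\<in>H. fst p \<noteq> 0"
  proof (rule ccontr)
    assume "\<not> ?thesis"
    then have "H \<subseteq> ?A" by auto
    then have "dim H \<le> 3" using dim_subset A_dim by metis
    with d show False by simp
  qed
  have first: "\<forall>f. (0,f) \<in> H"
  proof (cases "\<exists>p\<in>H. \<exists>q\<in>H. cross3 (fst p) (fst q) \<noteq> 0")
    case True
    then obtain p q where pq: "p \<in> H" "q \<in> H" and nz: "cross3 (fst p) (fst q) \<noteq> 0" by blast
    define x where "x = fst p"
    define n where "n = cross3 (fst p) (fst q)"
    have fstb: "fst (br6 p q) = 2 *\<^sub>R cross3 (fst p) (fst q)" for p q by (simp add: br6_def)
    define p3 where "p3 = (1/2) *\<^sub>R br6 p q"
    have p3H: "p3 \<in> H" unfolding p3_def using cl pq sc by blast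
    have fp3: "fst p3 = n" unfolding p3_def n_def by (simp add: fstb)
    define p4 where "p4 = (1/2) *\<^sub>R br6 p3 p"
    have p4H: "p4 \<in> H" unfolding p4_def using cl pq p3H sc by blast
    define mm where "mm = cross3 n x"
    have fp4: "fst p4 = mm" unfolding p4_def mm_def x_def by (simp add: fstb fp3)
    have xnz: "x \<noteq> 0" using nz x_def by auto
    have nnz: "n \<noteq> 0" using nz n_def by auto
    have o1: "x \<bullet> n = 0" unfolding n_def x_def by (simp add: dot_cross_self)
    have o2: "n \<bullet> mm = 0" "x \<bullet> mm = 0" unfolding mm_def by (simp_all add: dot_cross_self)
    have mnz: "mm \<noteq> 0"
    proof
      assume "mm = 0"
      then have "(norm n * norm x)^2 = 0" using norm_cross_dot[of n x] o1 unfolding mm_def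
        by (simp add: inner_commute)
      then show False using xnz nnz by simp
    qed
    let ?P = "fst ` H"
    have Psub: "subspace ?P" by (rule linear_subspace_image[OF linear_fst sub])
    have inP: "x \<in> ?P" "n \<in> ?P" "mm \<in> ?P"
      using pq p3H p4H fp3 fp4 x_def by (auto intro: image_eqI)
    have indep: "independent {x, n, mm}"
      by (rule pairwise_orthogonal_independent)
         (use o1 o2 xnz nnz mnz in \<open>auto simp: pairwise_def orthogonal_def inner_commute\<close>)
    have dist: "x \<noteq> n" "x \<noteq> mm" "n \<noteq> mm"
      using o1 o2 xnz nnz mnz by auto
    have "card {x, n, mm} \<le> dim ?P" by (rule independent_card_le_dim[OF _ indep]) (use inP in auto)
    then have "dim (UNIV::(real^3) set) \<le> dim ?P" using dist by simp
    then have Puniv: "?P = UNIV" using subspace_dim_equal[OF Psub subspace_UNIV] by auto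
    have "dim (H \<inter> ?A) \<ge> 1"
    proof -
      have "dim ?HA \<le> 6" using dim_subset_UNIV[of ?HA] by simp
      with sums d show ?thesis by linarith
    qed
    then have "\<not> (H \<inter> ?A \<subseteq> {0})" using dim_eq_0 by (metis not_one_le_zero)
    then obtain f where fH: "((0::real^3), f) \<in> H" and fnz: "f \<noteq> 0"
    proof -
      obtain p where p: "p \<in> H" "fst p = 0" "p \<noteq> 0" using \<open>\<not> (H \<inter> ?A \<subseteq> {0})\<close> by blast
      then have "p = (0, snd p)" by (simp add: prod_eq_iff)
      moreover have "snd p \<noteq> 0" using p by (simp add: prod_eq_iff)
      ultimately show ?thesis using that p(1) by metis
    qed
    show ?thesis
    proof
      fix v :: "real^3"
      have "cross3 f v \<in> fst ` H" using Puniv by simp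
      then obtain pp where pp: "pp \<in> H" "fst pp = cross3 f v" by auto
      obtain y where xy: "(cross3 f v, y) \<in> H"
        using pp by (metis prod.collapse)
      have "br6 (cross3 f v, y) (0, f) = 2 *\<^sub>R (0, (f \<bullet> f) *\<^sub>R v - (f \<bullet> v) *\<^sub>R f)"
        by (simp add: br6_def cross3_simps forall_3)
      then have "(0, (f \<bullet> f) *\<^sub>R v - (f \<bullet> v) *\<^sub>R f) \<in> H"
        using cl[OF xy fH] sc[of "br6 (cross3 f v, y) (0, f)" "1/2"] by simp
      then have "(0, (f \<bullet> f) *\<^sub>R v - (f \<bullet> v) *\<^sub>R f) + (f \<bullet> v) *\<^sub>R (0, f) \<in> H"
        using ad sc fH by blast
      then have h1: "(0, (f \<bullet> f) *\<^sub>R v) \<in> H" by (simp add: algebra_simps)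
      have "(1 / (f \<bullet> f)) *\<^sub>R ((0::real^3), (f \<bullet> f) *\<^sub>R v) = (0, v)"
        using fnz by (simp add: prod_eq_iff)
      then show "((0::real^3), v) \<in> H" using sc[OF h1, of "1 / (f \<bullet> f)"] by simp
    qed
  next
    case False
    then have cz: "\<And>p q. p \<in> H \<Longrightarrow> q \<in> H \<Longrightarrow> cross3 (fst p) (fst q) = 0" by blast
    obtain x where px: "\<And>p. p \<in> H \<Longrightarrow> \<exists>c. fst p = c *\<^sub>R x"
    proof (cases "\<exists>p\<in>H. fst p \<noteq> 0")
      case True
      then obtain p0 where p0: "p0 \<in> H" "fst p0 \<noteq> 0" by blast
      have "\<exists>c. fst p = c *\<^sub>R fst p0" if "p \<in> H" for p
      proof -
        have "collinear {0, fst p0, fst p}" using cz[OF p0(1) that] cross_eq_0 by blast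
        then show ?thesis using p0 collinear_lemma[of "fst p0" "fst p"] by auto
      qed
      then show ?thesis using that by blast
    next
      case False
      then show ?thesis using that[of 0] by auto
    qed
    let ?W = "{(x, 0), ((0::real^3), axis 1 1), (0, axis 2 1), (0, axis 3 1)} :: v6 set"
    have "?HA \<subseteq> span ?W"
    proof
      fix z assume "z \<in> ?HA"
      then obtain h a where z: "z = h + a" "h \<in> H" "fst a = 0" by blast
      obtain c where c: "fst h = c *\<^sub>R x" using px z(2) by blast
      have "z = c *\<^sub>R (x, 0) + (0, snd h + snd a)" using z c by (simp add: prod_eq_iff)
      also have "\<dots> \<in> span ?W"
        by (subst zero_f_expand) (intro span_add span_scale span_base; simp)
      finally show "z \<in> span ?W" .
    qed
    then have "dim ?HA \<le> card ?W" by (rule dim_le_card) simp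
    also have "card ?W \<le> 4" by (rule card4)
    finally have "dim (H \<inter> ?A) \<ge> 3" using sums d by linarith
    have "H \<inter> ?A = ?A"
      by (rule subspace_dim_equal[OF subspace_inter[OF sub A_subspace] A_subspace])
         (use \<open>dim (H \<inter> ?A) \<ge> 3\<close> A_dim in auto)
    show ?thesis
    proof
      fix f :: "real^3"
      have "((0::real^3), f) \<in> ?A" by simp
      then show "((0::real^3), f) \<in> H" using \<open>H \<inter> ?A = ?A\<close> by blast
    qed
  qed
  show ?thesis using first second by blast
qed



lemma triple1: "b \<bullet> cross3 x w = x \<bullet> cross3 w b"
  by (simp add: cross3_simps)

lemma triple2: "b \<bullet> cross3 x g = g \<bullet> cross3 b x"
  by (simp add: cross3_simps)

lemma no_ksymp6:
  fixes T :: "nat \<Rightarrow> v6 \<Rightarrow> v6 \<Rightarrow> real" and H :: "v6 set" and k :: nat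
  assumes k1: "k \<ge> 1"
    and add: "\<And>i p p' q. i \<in> {1..k} \<Longrightarrow> T i (p+p') q = T i p q + T i p' q"
    and hom: "\<And>i r p q. i \<in> {1..k} \<Longrightarrow> T i (r *\<^sub>R p) q = r * T i p q"
    and skew: "\<And>i p q. i \<in> {1..k} \<Longrightarrow> T i p q = - T i q p"
    and coc: "\<And>i p q r. i \<in> {1..k} \<Longrightarrow> T i (br6 p q) r + T i (br6 q r) p + T i (br6 r p) q = 0"
    and ker: "\<And>p. (\<And>i q. i \<in> {1..k} \<Longrightarrow> T i p q = 0) \<Longrightarrow> p = 0"
    and Hc: "k \<ge> 2 \<Longrightarrow> subspace H \<and> (\<forall>p\<in>H. \<forall>q\<in>H. br6 p q \<in> H) \<and> dim H \<ge> 4 \<and>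
               (\<forall>i\<in>{1..k}. \<forall>p\<in>H. \<forall>q\<in>H. T i p q = 0)"
  shows False
proof -
  have "\<forall>i\<in>{1..k}. \<exists>b. \<forall>x y f. T i (x,y) (0,f) = b \<bullet> cross3 x f"
  proof
    fix i assume i: "i \<in> {1..k}"
    show "\<exists>b. \<forall>x y f. T i (x,y) (0,f) = b \<bullet> cross3 x f"
      by (rule cocycle_form[OF add[OF i] hom[OF i] skew[OF i] coc[OF i]])
  qed
  then obtain b where b: "\<And>i x y f. i \<in> {1..k} \<Longrightarrow> T i (x,y) (0,f) = b i \<bullet> cross3 x f"
    by metis
  have kerw: "w = 0" if w: "\<And>i. i \<in> {1..k} \<Longrightarrow> cross3 w (b i) = 0" for w
  proof -
    have "((0::real^3), w) = 0"
    proof (rule ker)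
      fix i q assume i: "i \<in> {1..k}"
      have "T i (0,w) q = - T i q (0, w)" by (rule skew[OF i])
      also have "\<dots> = - T i (fst q, snd q) (0, w)" by simp
      also have "\<dots> = - (b i \<bullet> cross3 (fst q) w)" using b[OF i, of "fst q" "snd q" w] by simp
      also have "\<dots> = - (fst q \<bullet> cross3 w (b i))" using triple1[of "b i" "fst q" w] by simp
      also have "\<dots> = 0" using w[OF i] by simp
      finally show "T i (0,w) q = 0" .
    qed
    then show ?thesis by (simp add: zero_prod_def)
  qed
  show False
  proof (cases "k = 1")
    case True
    define w where "w = (if b 1 = 0 then axis 1 1 else b 1)"
    have "w \<noteq> 0" unfolding w_def by (simp add: axis_eq_0_iff)
    moreover have "w = 0"
      by (rule kerw) (use True in \<open>auto simp: w_def\<close>)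
    ultimately show False by simp
  next
    case False
    then have k2: "k \<ge> 2" using k1 by simp
    note HH = Hc[OF k2]
    have sub: "subspace H" and cl: "\<And>p q. p\<in>H \<Longrightarrow> q\<in>H \<Longrightarrow> br6 p q \<in> H" and d: "dim H \<ge> 4"
      and iso: "\<And>i p q. i\<in>{1..k} \<Longrightarrow> p\<in>H \<Longrightarrow> q\<in>H \<Longrightarrow> T i p q = 0"
      using HH by auto
    obtain p where pH: "p \<in> H" and pnz: "fst p \<noteq> 0" and AH: "\<And>f. ((0::real^3), f) \<in> H"
      using subalg_A[OF sub cl d] by blast
    have "cross3 (fst p) (b i) = 0" if i: "i \<in> {1..k}" for i
    proof -
      let ?g = "cross3 (b i) (fst p)"
      have "T i (fst p, snd p) (0, ?g) = 0" using iso[OF i] pH AH by simp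
      then have "b i \<bullet> cross3 (fst p) ?g = 0" using b[OF i, of "fst p" "snd p" ?g] by simp
      then have "?g \<bullet> ?g = 0" using triple2[of "b i" "fst p" ?g] by simp
      then have "?g = 0" by simp
      then show ?thesis by (metis cross_skew neg_equal_0_iff_equal)
    qed
    then have "fst p = 0" by (rule kerw)
    with pnz show False by simp
  qed
qed



definition Mx :: "real^3 \<Rightarrow> complex^2^2" where
  "Mx x = (\<chi> r c. if r = 1 then (if c = 1 then Complex 0 (x$1) else Complex (x$2) (x$3))
                   else (if c = 1 then Complex (- x$2) (x$3) else Complex 0 (- x$1)))"

definition crd :: "complex^2^2 \<Rightarrow> real^3" where
  "crd A = vector [Im (A$1$1), Re (A$1$2), Im (A$1$2)]"

lemma Mx_nth: "Mx x $ 1 $ 1 = Complex 0 (x$1)" "Mx x $ 1 $ 2 = Complex (x$2) (x$3)"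
  "Mx x $ 2 $ 1 = Complex (- x$2) (x$3)" "Mx x $ 2 $ 2 = Complex 0 (- x$1)"
  by (simp_all add: Mx_def)

lemma Mx_su2: "Mx x \<in> su2"
  unfolding su2_def by (auto simp: forall_2 Mx_nth complex_eq_iff)

lemma crd_Mx: "crd (Mx x) = x"
  by (simp add: crd_def Mx_nth vec_eq_iff forall_3 vector_def)

lemma Mx_crd: assumes "A \<in> su2" shows "Mx (crd A) = A"
proof -
  have h: "\<And>i j. A$i$j = - cnj (A$j$i)" and t: "A$1$1 + A$2$2 = 0" using assms unfolding su2_def mem_Collect_eq by blast+
  have "Re (A$1$1) = Re (- cnj (A$1$1))" using h[of 1 1] by (rule arg_cong)
  then have a11: "Re (A$1$1) = 0" by simp
  have a22: "A$2$2 = - A$1$1" using t by (simp add: eq_neg_iff_add_eq_0 add.commute)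
  have a21: "A$2$1 = - cnj (A$1$2)" using h[of 2 1] by simp
  show ?thesis
    by (simp add: vec_eq_iff forall_2 Mx_nth crd_def vector_def complex_eq_iff a11 a22 a21)
qed

lemma Mx_add: "Mx (x + y) = Mx x + Mx y"
  by (simp add: vec_eq_iff forall_2 Mx_nth complex_eq_iff)

lemma Mx_scale: "Mx (r *\<^sub>R x) = r *\<^sub>R Mx x"
  by (simp add: vec_eq_iff forall_2 Mx_nth complex_eq_iff)

lemma Mx_bracket: "su2_bracket (Mx x) (Mx y) = Mx (2 *\<^sub>R cross3 x y)"
  by (simp add: su2_bracket_def vec_eq_iff forall_2 Mx_nth complex_eq_iff matrix_matrix_mult_def
      sum_2 cross3_simps)


lemma crd_add: "crd (A + B) = crd A + crd B"
  by (simp add: crd_def vec_eq_iff forall_3 vector_def)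

lemma crd_scale: "crd (r *\<^sub>R A) = r *\<^sub>R crd A"
  by (simp add: crd_def vec_eq_iff forall_3 vector_def)

lemma su2_add: "A \<in> su2 \<Longrightarrow> B \<in> su2 \<Longrightarrow> A + B \<in> su2"
  by (metis Mx_crd Mx_add Mx_su2)

lemma su2_scale: "A \<in> su2 \<Longrightarrow> r *\<^sub>R A \<in> su2"
  by (metis Mx_crd Mx_scale Mx_su2)

definition Fy :: "real^3 \<Rightarrow> (complex^2^2 \<Rightarrow> real)" where
  "Fy y = (\<lambda>A. if A \<in> su2 then y \<bullet> crd A else 0)"

lemma Fy_Mx: "Fy y (Mx z) = y \<bullet> z"
  by (simp add: Fy_def Mx_su2 crd_Mx)

lemma Fy_dual: "Fy y \<in> su2_dual"
  unfolding su2_dual_def Fy_def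
  by (auto simp: su2_add su2_scale crd_add crd_scale inner_add_right)

lemma Mx_expand: "Mx z = z$1 *\<^sub>R Mx (axis 1 1) + z$2 *\<^sub>R Mx (axis 2 1) + z$3 *\<^sub>R Mx (axis 3 1)"
  by (metis Mx_add Mx_scale vec3_expand)

lemma dual_eq:
  assumes a: "\<alpha> \<in> su2_dual"
  shows "Fy (vector [\<alpha> (Mx (axis 1 1)), \<alpha> (Mx (axis 2 1)), \<alpha> (Mx (axis 3 1))]) = \<alpha>"
proof
  fix A
  have ad: "\<And>a b. a \<in> su2 \<Longrightarrow> b \<in> su2 \<Longrightarrow> \<alpha> (a + b) = \<alpha> a + \<alpha> b"
    and sc: "\<And>r a. a \<in> su2 \<Longrightarrow> \<alpha> (r *\<^sub>R a) = r * \<alpha> a"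
    and out: "\<And>x. x \<notin> su2 \<Longrightarrow> \<alpha> x = 0"
    using a unfolding su2_dual_def mem_Collect_eq by blast+
  show "Fy (vector [\<alpha> (Mx (axis 1 1)), \<alpha> (Mx (axis 2 1)), \<alpha> (Mx (axis 3 1))]) A = \<alpha> A"
  proof (cases "A \<in> su2")
    case True
    let ?z = "crd A"
    have "\<alpha> A = \<alpha> (Mx ?z)" using Mx_crd[OF True] by simp
    also have "\<dots> = \<alpha> (?z$1 *\<^sub>R Mx (axis 1 1) + ?z$2 *\<^sub>R Mx (axis 2 1) + ?z$3 *\<^sub>R Mx (axis 3 1))"
      by (subst Mx_expand) simp
    also have "\<dots> = ?z$1 * \<alpha> (Mx (axis 1 1)) + ?z$2 * \<alpha> (Mx (axis 2 1)) + ?z$3 * \<alpha> (Mx (axis 3 1))"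
      by (simp add: ad sc su2_add su2_scale Mx_su2)
    finally show ?thesis using True
      by (simp add: Fy_def inner_vec_def sum_3 vector_def algebra_simps)
  next
    case False
    then show ?thesis by (simp add: Fy_def out)
  qed
qed

definition psi :: "v6 \<Rightarrow> tsu2" where
  "psi p = (Mx (fst p), Fy (snd p))"

definition cinv :: "tsu2 \<Rightarrow> v6" where
  "cinv u = (crd (fst u), vector [snd u (Mx (axis 1 1)), snd u (Mx (axis 2 1)), snd u (Mx (axis 3 1))])"

lemma psi_in: "psi p \<in> Tsu2"
  by (simp add: psi_def Tsu2_def Mx_su2 Fy_dual)

lemma psi_cinv: "u \<in> Tsu2 \<Longrightarrow> psi (cinv u) = u"
  by (auto simp: psi_def cinv_def Tsu2_def Mx_crd dual_eq prod_eq_iff)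

lemma psi_add: "psi (p + q) = psi p + psi q"
  by (simp add: psi_def Mx_add Fy_def fun_eq_iff inner_add_left)

lemma psi_scale: "psi (r *\<^sub>R p) = Tsu2_scale r (psi p)"
  by (simp add: psi_def Tsu2_scale_def Mx_scale Fy_def fun_eq_iff)

lemma psi_zero: "psi 0 = 0"
  using psi_scale[of 0 0] by (simp add: Tsu2_scale_def zero_prod_def zero_fun_def)

lemma psi_inj: assumes "psi p = psi q" shows "p = q"
proof -
  have m: "Mx (fst p) = Mx (fst q)" and f: "Fy (snd p) = Fy (snd q)" using assms by (simp_all add: psi_def)
  have "fst p = fst q" using arg_cong[OF m, of crd] by (simp add: crd_Mx)
  moreover have "snd p = snd q"
  proof -
    have "\<And>i. Fy (snd p) (Mx (axis i 1)) = Fy (snd q) (Mx (axis i 1))" using f by simp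
    then have "\<And>i. snd p $ i = snd q $ i" by (simp add: Fy_Mx inner_axis)
    then show ?thesis by (simp add: vec_eq_iff)
  qed
  ultimately show ?thesis by (simp add: prod_eq_iff)
qed

lemma psi_br: "Tsu2_bracket (psi p) (psi q) = psi (br6 p q)"
proof -
  obtain x y where p: "p = (x,y)" by (cases p)
  obtain x' y' where q: "q = (x',y')" by (cases q)
  have coad: "su2_coad (Mx a) (Fy c) w = (if w \<in> su2 then - (2 * (c \<bullet> cross3 a (crd w))) else 0)" for a c w
  proof (cases "w \<in> su2")
    case True
    have "su2_bracket (Mx a) w = Mx (2 *\<^sub>R cross3 a (crd w))" using Mx_bracket[of a "crd w"] Mx_crd[OF True] by simp
    then show ?thesis using True by (simp add: su2_coad_def Fy_Mx)
  qed (simp add: su2_coad_def)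
  have "snd (Tsu2_bracket (psi p) (psi q)) = snd (psi (br6 p q))"
  proof
    fix w
    show "snd (Tsu2_bracket (psi p) (psi q)) w = snd (psi (br6 p q)) w"
      unfolding Tsu2_bracket_def psi_def p q fst_conv snd_conv coad
      by (simp add: br6_def Fy_def cross3_simps)
  qed
  moreover have "fst (Tsu2_bracket (psi p) (psi q)) = fst (psi (br6 p q))"
    by (simp add: Tsu2_bracket_def psi_def br6_def Mx_bracket)
  ultimately show ?thesis by (simp add: prod_eq_iff)
qed



lemma vs_T: "vector_space Tsu2_scale"
  by unfold_locales (auto simp: Tsu2_scale_def prod_eq_iff fun_eq_iff algebra_simps scaleR_add_right scaleR_add_left)

lemma lin_psi: "Vector_Spaces.linear scaleR Tsu2_scale psi"
  unfolding Vector_Spaces.linear_iff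
  using vs_T real_vector.vector_space_axioms by (auto simp: psi_add psi_scale)

lemma dimpsi: "vector_space.dim Tsu2_scale (psi ` S) = dim S"
proof -
  interpret P: finite_dimensional_vector_space_pair_1 "scaleR::real\<Rightarrow>v6\<Rightarrow>v6" Basis Tsu2_scale
    by (rule finite_dimensional_vector_space_pair_1.intro[OF finite_dimensional_vector_space_euclidean vs_T])
  have "inj_on psi (module.span scaleR S)" by (meson inj_onI psi_inj)
  from P.dim_image_eq[OF lin_psi this] show ?thesis by (simp add: dim_raw_def)
qed

theorem mainTheorem13:
  "\<forall>k::nat. k \<ge> 1 \<longrightarrow>
     \<not> (\<exists>H \<theta>. k_symplectic_structure Tsu2_scale Tsu2_bracket Tsu2 k H \<theta>)"
proof (intro allI impI notI)
  fix k :: nat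
  assume k1: "k \<ge> 1" and "\<exists>H \<theta>. k_symplectic_structure Tsu2_scale Tsu2_bracket Tsu2 k H \<theta>"
  then obtain H \<theta> where KS: "k_symplectic_structure Tsu2_scale Tsu2_bracket Tsu2 k H \<theta>" by blast
  have KS': "k \<ge> 1 \<and>
     (\<exists>n::nat. n \<ge> 1 \<and> vector_space.dim Tsu2_scale Tsu2 = n * (k + 1) \<and> vector_space.dim Tsu2_scale H = n * k) \<and>
     lie_subalgebra Tsu2_scale Tsu2_bracket Tsu2 H \<and>
     (\<forall>i\<in>{1..k}. skew_bilinear_form Tsu2_scale Tsu2 (\<theta> i)) \<and>
     (\<Inter>i\<in>{1..k}. form_kernel Tsu2 (\<theta> i)) = {0} \<and>
     (\<forall>i\<in>{1..k}. two_cocycle Tsu2_bracket Tsu2 (\<theta> i)) \<and>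
     (\<forall>i\<in>{1..k}. \<forall>u\<in>H. \<forall>v\<in>H. \<theta> i u v = 0)"
    using KS unfolding k_symplectic_structure_def .
  obtain n where n1: "n \<ge> 1" and dL: "vector_space.dim Tsu2_scale Tsu2 = n * (k + 1)"
    and dH: "vector_space.dim Tsu2_scale H = n * k"
    using KS'[THEN conjunct2, THEN conjunct1] by blast
  have LS: "lie_subalgebra Tsu2_scale Tsu2_bracket Tsu2 H"
    using KS'[THEN conjunct2, THEN conjunct2, THEN conjunct1] .
  have SB: "\<And>i. i \<in> {1..k} \<Longrightarrow> skew_bilinear_form Tsu2_scale Tsu2 (\<theta> i)"
    using KS'[THEN conjunct2, THEN conjunct2, THEN conjunct2, THEN conjunct1] by blast
  have KER: "(\<Inter>i\<in>{1..k}. form_kernel Tsu2 (\<theta> i)) = {0}"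
    using KS'[THEN conjunct2, THEN conjunct2, THEN conjunct2, THEN conjunct2, THEN conjunct1] .
  have COC: "\<And>i. i \<in> {1..k} \<Longrightarrow> two_cocycle Tsu2_bracket Tsu2 (\<theta> i)"
    using KS'[THEN conjunct2, THEN conjunct2, THEN conjunct2, THEN conjunct2, THEN conjunct2, THEN conjunct1] by blast
  have ISO: "\<And>i u v. i \<in> {1..k} \<Longrightarrow> u \<in> H \<Longrightarrow> v \<in> H \<Longrightarrow> \<theta> i u v = 0"
    using KS'[THEN conjunct2, THEN conjunct2, THEN conjunct2, THEN conjunct2, THEN conjunct2, THEN conjunct2] by blast
  have HL: "H \<subseteq> Tsu2" and Hsub: "real_subspace_of Tsu2_scale H"
    and Hcl: "\<And>u v. u \<in> H \<Longrightarrow> v \<in> H \<Longrightarrow> Tsu2_bracket u v \<in> H"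
    using LS unfolding lie_subalgebra_def by blast+
  have Teq: "Tsu2 = range psi"
  proof
    show "Tsu2 \<subseteq> range psi" using psi_cinv by (metis image_eqI subsetI UNIV_I)
    show "range psi \<subseteq> Tsu2" using psi_in by auto
  qed
  have dim6: "vector_space.dim Tsu2_scale Tsu2 = 6"
    using dimpsi[of UNIV] Teq by simp
  define H' where "H' = psi -` H"
  have HH: "psi ` H' = H" unfolding H'_def using HL Teq by auto
  have dimH': "dim H' = n * k" using dimpsi[of H'] HH dH by simp
  define T where "T i p q = \<theta> i (psi p) (psi q)" for i p q
  show False
  proof (rule no_ksymp6[of k T H'])
    show "1 \<le> k" by fact
  next
    fix i p p' q assume i: "i \<in> {1..k}"
    show "T i (p + p') q = T i p q + T i p' q"
      using SB[OF i] psi_in unfolding T_def skew_bilinear_form_def psi_add by blast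
  next
    fix i r p q assume i: "i \<in> {1..k}"
    show "T i (r *\<^sub>R p) q = r * T i p q"
      using SB[OF i] psi_in unfolding T_def skew_bilinear_form_def psi_scale by blast
  next
    fix i p q assume i: "i \<in> {1..k}"
    show "T i p q = - T i q p"
      using SB[OF i] psi_in unfolding T_def skew_bilinear_form_def by blast
  next
    fix i p q r assume i: "i \<in> {1..k}"
    show "T i (br6 p q) r + T i (br6 q r) p + T i (br6 r p) q = 0"
      using COC[OF i] psi_in unfolding T_def two_cocycle_def psi_br[symmetric] by blast
  next
    fix p assume h: "\<And>i q. i \<in> {1..k} \<Longrightarrow> T i p q = 0"
    have "psi p \<in> (\<Inter>i\<in>{1..k}. form_kernel Tsu2 (\<theta> i))"
    proof (intro INT_I)
      fix i assume i: "i \<in> {1..k}"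
      show "psi p \<in> form_kernel Tsu2 (\<theta> i)"
        unfolding form_kernel_def
      proof (intro CollectI conjI ballI)
        show "psi p \<in> Tsu2" by (rule psi_in)
        fix v assume v: "v \<in> Tsu2"
        have "\<theta> i (psi p) v = T i p (cinv v)" unfolding T_def using psi_cinv[OF v] by simp
        then show "\<theta> i (psi p) v = 0" using h[OF i] by simp
      qed
    qed
    then have "psi p = 0" using KER by blast
    then have "psi p = psi 0" by (simp add: psi_zero)
    then show "p = 0" by (rule psi_inj)
  next
    assume k2: "2 \<le> k"
    have sub: "subspace H'"
      unfolding subspace_def H'_def
    proof (intro conjI ballI allI)
      show "0 \<in> psi -` H" using Hsub psi_zero unfolding real_subspace_of_def by simp
      fix x y assume "x \<in> psi -` H" "y \<in> psi -` H"
      then show "x + y \<in> psi -` H" using Hsub psi_add unfolding real_subspace_of_def by simp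
    next
      fix c x assume "x \<in> psi -` H"
      then show "c *\<^sub>R x \<in> psi -` H" using Hsub psi_scale unfolding real_subspace_of_def by simp
    qed
    have cl: "\<forall>p\<in>H'. \<forall>q\<in>H'. br6 p q \<in> H'"
      unfolding H'_def using Hcl psi_br by (metis vimage_eq)
    have "n * k \<ge> 4"
    proof -
      have a: "n * 3 \<le> n * (k + 1)" by (rule mult_le_mono2) (use k2 in simp)
      have "n * (k + 1) = 6" using dL dim6 by simp
      then have "n \<le> 2" using a by linarith
      have "n * k + n = 6" using dL dim6 by (simp add: algebra_simps)
      then show ?thesis using \<open>n \<le> 2\<close> by linarith
    qed
    then have d4: "dim H' \<ge> 4" using dimH' by simp
    have iso: "\<forall>i\<in>{1..k}. \<forall>p\<in>H'. \<forall>q\<in>H'. T i p q = 0"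
      unfolding T_def H'_def using ISO by simp
    show "subspace H' \<and> (\<forall>p\<in>H'. \<forall>q\<in>H'. br6 p q \<in> H') \<and> dim H' \<ge> 4 \<and>
               (\<forall>i\<in>{1..k}. \<forall>p\<in>H'. \<forall>q\<in>H'. T i p q = 0)"
      using sub cl d4 iso by blast
  qed
qed


end
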